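(* Let $G$ be a graph, let $S$ be a minimal separator of $G$, let $\mu$ be a probability measure on $S$, and let $\alpha<1$ be a constant such that $\mu(N(v))<\alpha$ for every $v\in V(G)$. Let $A$ and $B$ be two full components of $G\setminus S$. If two vertices $x,y\in S$ are chosen independently at random according to $\mu$, then the probability that $(x,y)$ is not lucky with respect to $A$ is less than $6\alpha$ (and likewise with respect to $B$).
   Context: All graphs are finite, simple and undirected. $N(v)$ is the open neighbourhood of $v$ and $\mu(N(v))$ means $\mu(N(v)\cap S)$. For distinct $s,t\in V(G)$, $S$ is an $s$-$t$ separator if $s,t$ lie in different components of $G\setminus S$, minimal if no proper subset is an $s$-$t$ separator; $S$ is a minimal separator of $G$ if it is a minimal $s$-$t$ separator for some $s,t$. A component $C$ of $G\setminus S$ is full if every vertex of $S$ has a neighbour in $C$. A vertex $x\in S$ is lucky with respect to $A$ if there is an induced path on four vertices in $G$ with one endpoint $x$ and the remaining three vertices in $A$. A pair $(x,y)\in S\times S$ is lucky with respect to $A$ if $x$ is lucky with respect to $A$, or there exists an induced path on four vertices in $G$ with endpoints $x$ and $y$ and its two middle vertices in $A$. *)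

theory Defs
  imports Complex_Main
begin

definition simple_graph :: "'a set \<Rightarrow> ('a \<Rightarrow> 'a \<Rightarrow> bool) \<Rightarrow> bool" where
  "simple_graph V E \<longleftrightarrow> finite V \<and> (\<forall>u v. E u v \<longrightarrow> u \<in> V \<and> v \<in> V)
     \<and> (\<forall>u v. E u v \<longrightarrow> E v u) \<and> (\<forall>v. \<not> E v v)"

definition nbhd :: "'a set \<Rightarrow> ('a \<Rightarrow> 'a \<Rightarrow> bool) \<Rightarrow> 'a \<Rightarrow> 'a set" where
  "nbhd V E v = {u \<in> V. E v u}"

definition conn_in :: "('a \<Rightarrow> 'a \<Rightarrow> bool) \<Rightarrow> 'a set \<Rightarrow> 'a \<Rightarrow> 'a \<Rightarrow> bool" where
  "conn_in E X u v \<longleftrightarrow> u \<in> X \<and> v \<in> X \<and> (\<lambda>a b. E a b \<and> a \<in> X \<and> b \<in> X)\<^sup>*\<^sup>* u v"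

definition component_of :: "'a set \<Rightarrow> ('a \<Rightarrow> 'a \<Rightarrow> bool) \<Rightarrow> 'a set \<Rightarrow> 'a set \<Rightarrow> bool" where
  "component_of V E S C \<longleftrightarrow> (\<exists>u \<in> V - S. C = {v. conn_in E (V - S) u v})"

definition full_component :: "'a set \<Rightarrow> ('a \<Rightarrow> 'a \<Rightarrow> bool) \<Rightarrow> 'a set \<Rightarrow> 'a set \<Rightarrow> bool" where
  "full_component V E S C \<longleftrightarrow> component_of V E S C \<and> (\<forall>x \<in> S. \<exists>c \<in> C. E x c)"

definition st_separator :: "'a set \<Rightarrow> ('a \<Rightarrow> 'a \<Rightarrow> bool) \<Rightarrow> 'a \<Rightarrow> 'a \<Rightarrow> 'a set \<Rightarrow> bool" where
  "st_separator V E s t S \<longleftrightarrow> S \<subseteq> V \<and> s \<in> V - S \<and> t \<in> V - S \<and> s \<noteq> t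
     \<and> \<not> conn_in E (V - S) s t"

definition minimal_st_separator :: "'a set \<Rightarrow> ('a \<Rightarrow> 'a \<Rightarrow> bool) \<Rightarrow> 'a \<Rightarrow> 'a \<Rightarrow> 'a set \<Rightarrow> bool" where
  "minimal_st_separator V E s t S \<longleftrightarrow> st_separator V E s t S
     \<and> (\<forall>T. T \<subset> S \<longrightarrow> \<not> st_separator V E s t T)"

definition minimal_separator :: "'a set \<Rightarrow> ('a \<Rightarrow> 'a \<Rightarrow> bool) \<Rightarrow> 'a set \<Rightarrow> bool" where
  "minimal_separator V E S \<longleftrightarrow> (\<exists>s t. minimal_st_separator V E s t S)"

definition induced_P4 :: "('a \<Rightarrow> 'a \<Rightarrow> bool) \<Rightarrow> 'a \<Rightarrow> 'a \<Rightarrow> 'a \<Rightarrow> 'a \<Rightarrow> bool" where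
  "induced_P4 E a b c d \<longleftrightarrow> distinct [a, b, c, d] \<and> E a b \<and> E b c \<and> E c d
     \<and> \<not> E a c \<and> \<not> E b d \<and> \<not> E a d"

definition lucky_vertex :: "('a \<Rightarrow> 'a \<Rightarrow> bool) \<Rightarrow> 'a set \<Rightarrow> 'a \<Rightarrow> bool" where
  "lucky_vertex E A x \<longleftrightarrow> (\<exists>b \<in> A. \<exists>c \<in> A. \<exists>d \<in> A. induced_P4 E x b c d)"

definition lucky_pair :: "('a \<Rightarrow> 'a \<Rightarrow> bool) \<Rightarrow> 'a set \<Rightarrow> 'a \<Rightarrow> 'a \<Rightarrow> bool" where
  "lucky_pair E A x y \<longleftrightarrow> lucky_vertex E A x \<or> (\<exists>b \<in> A. \<exists>c \<in> A. induced_P4 E x b c y)"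

definition prob_weights :: "'a set \<Rightarrow> ('a \<Rightarrow> real) \<Rightarrow> bool" where
  "prob_weights S w \<longleftrightarrow> (\<forall>x \<in> S. 0 \<le> w x) \<and> sum w S = 1"

end

theory Submission
  imports Defs
begin

locale lsetup =
  fixes V :: "'a set" and E :: "'a \<Rightarrow> 'a \<Rightarrow> bool" and S A :: "'a set" and u :: 'a
  assumes sg: "simple_graph V E"
    and uW: "u \<in> V - S"
    and Adef: "A = {v. conn_in E (V - S) u v}"
    and fullA: "\<forall>x \<in> S. \<exists>c \<in> A. E x c"
begin

abbreviation R where "R \<equiv> (\<lambda>a b. E a b \<and> a \<in> V - S \<and> b \<in> V - S)"

definition dd :: "'a \<Rightarrow> nat" where "dd a = (LEAST n. (R ^^ n) u a)"

lemma Es: "E a b \<Longrightarrow> E b a" using sg unfolding simple_graph_def by blast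
lemma EV: "E a b \<Longrightarrow> a \<in> V \<and> b \<in> V" using sg unfolding simple_graph_def by blast
lemma irr: "\<not> E a a" using sg unfolding simple_graph_def by blast

lemma A_iff: "a \<in> A \<longleftrightarrow> a \<in> V - S \<and> R\<^sup>*\<^sup>* u a"
  using uW unfolding Adef conn_in_def by auto

lemma uA: "u \<in> A" using A_iff uW by auto

lemma AnS: "x \<in> S \<Longrightarrow> x \<notin> A" using A_iff by auto
lemma AV: "a \<in> A \<Longrightarrow> a \<in> V" using A_iff by auto

lemma d_wit: "a \<in> A \<Longrightarrow> (R ^^ dd a) u a"
proof -
  assume "a \<in> A"
  then have "R\<^sup>*\<^sup>* u a" using A_iff by blast
  then obtain n where "(R ^^ n) u a" unfolding rtranclp_power by blast
  then show ?thesis unfolding dd_def by (rule LeastI)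
qed

lemma d_le: "(R ^^ n) u a \<Longrightarrow> dd a \<le> n"
  unfolding dd_def by (rule Least_le)

lemma P1: "a \<in> A \<Longrightarrow> b \<in> A \<Longrightarrow> E a b \<Longrightarrow> dd b \<le> Suc (dd a)"
proof -
  assume a: "a \<in> A" and b: "b \<in> A" and e: "E a b"
  have "(R ^^ Suc (dd a)) u b"
    by (rule relpowp_Suc_I[OF d_wit[OF a]]) (use a b e A_iff in auto)
  then show ?thesis by (rule d_le)
qed

lemma d0: "a \<in> A \<Longrightarrow> dd a = 0 \<Longrightarrow> a = u"
proof -
  assume a: "a \<in> A" and d: "dd a = 0"
  from d_wit[OF a] d have "(R ^^ 0) u a" by simp
  then show "a = u" by (rule relpowp_0_E) simp
qed

lemma du: "dd u = 0"
  using d_le[OF relpowp_0_I[of R u]] by simp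

lemma P2: "a \<in> A \<Longrightarrow> dd a = Suc n \<Longrightarrow> \<exists>p \<in> A. E p a \<and> dd p = n"
proof -
  assume a: "a \<in> A" and d: "dd a = Suc n"
  from d_wit[OF a] d have "(R ^^ Suc n) u a" by simp
  then obtain p where p1: "(R ^^ n) u p" and p2: "R p a" by (rule relpowp_Suc_E)
  have "R\<^sup>*\<^sup>* u p" using p1 by (rule relpowp_imp_rtranclp)
  then have pA: "p \<in> A" using p2 A_iff by blast
  have "dd p \<le> n" using p1 by (rule d_le)
  moreover have "dd a \<le> Suc (dd p)" using P1[OF pA a] p2 by blast
  ultimately have "dd p = n" using d by linarith
  then show ?thesis using pA p2 by blast
qed

definition ell :: "'a \<Rightarrow> nat" where
  "ell x = (LEAST n. \<exists>a \<in> A. E x a \<and> dd a = n)"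

definition f :: "'a \<Rightarrow> 'a" where
  "f x = (SOME a. a \<in> A \<and> E x a \<and> dd a = ell x)"

lemma ell_ex: "x \<in> S \<Longrightarrow> \<exists>a \<in> A. E x a \<and> dd a = ell x"
proof -
  assume "x \<in> S"
  then obtain c where "c \<in> A" "E x c" using fullA by blast
  then have "\<exists>n. \<exists>a \<in> A. E x a \<and> dd a = n" by blast
  then show ?thesis unfolding ell_def by (rule LeastI_ex)
qed

lemma f_prop: "x \<in> S \<Longrightarrow> f x \<in> A \<and> E x (f x) \<and> dd (f x) = ell x"
proof -
  assume x: "x \<in> S"
  have "\<exists>a. a \<in> A \<and> E x a \<and> dd a = ell x" using ell_ex[OF x] by blast
  then show ?thesis unfolding f_def by (rule someI_ex)
qed

lemma ell_le: "a \<in> A \<Longrightarrow> E x a \<Longrightarrow> ell x \<le> dd a"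
proof -
  assume "a \<in> A" "E x a"
  then have "\<exists>a'\<in>A. E x a' \<and> dd a' = dd a" by blast
  then show ?thesis unfolding ell_def by (rule Least_le)
qed

lemma P4L: "b \<in> A \<Longrightarrow> c \<in> A \<Longrightarrow> d \<in> A \<Longrightarrow> induced_P4 E x b c d \<Longrightarrow> lucky_vertex E A x"
  unfolding lucky_vertex_def by blast

lemma L_far:
  assumes x: "x \<in> S" and l: "ell x \<ge> 2"
  shows "lucky_vertex E A x"
proof -
  obtain m where m: "ell x = Suc (Suc m)" using l by (metis add_2_eq_Suc le_Suc_ex)
  define a where "a = f x"
  have aA: "a \<in> A" and xa: "E x a" and da: "dd a = Suc (Suc m)"
    using f_prop[OF x] m a_def by auto
  obtain p where pA: "p \<in> A" and pa: "E p a" and dp: "dd p = Suc m" using P2[OF aA da] by blast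
  obtain g where gA: "g \<in> A" and gp: "E g p" and dg: "dd g = m" using P2[OF pA dp] by blast
  have "\<not> E x p" using ell_le[OF pA] m dp by fastforce
  moreover have "\<not> E x g" using ell_le[OF gA] m dg by fastforce
  moreover have "\<not> E a g" using P1[OF gA aA] Es da dg by fastforce
  moreover have "x \<notin> A" using AnS x by auto
  ultimately have "induced_P4 E x a p g"
    unfolding induced_P4_def using xa pa gp Es aA pA gA da dp dg by auto
  then show ?thesis using P4L aA pA gA by blast
qed

lemma claim:
  assumes x: "x \<in> S" and nl: "\<not> lucky_vertex E A x" and xu: "\<not> E x u"
    and aA: "a \<in> A" and xa: "E x a" and da: "dd a = 1"
  shows "\<forall>v p. v \<in> A \<longrightarrow> p \<in> A \<longrightarrow> E p v \<longrightarrow> dd v = Suc n \<longrightarrow> dd p = n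
     \<longrightarrow> \<not> E x v \<longrightarrow> \<not> E x p \<longrightarrow> Suc n \<le> 2 \<and> (Suc n = 2 \<longrightarrow> E a v)"
proof (induction n)
  case 0
  then show ?case by auto
next
  case (Suc m)
  show ?case
  proof (intro allI impI)
    fix v p
    assume vA: "v \<in> A" and pA: "p \<in> A" and pv: "E p v" and dv: "dd v = Suc (Suc m)"
      and dp: "dd p = Suc m" and xv: "\<not> E x v" and xp: "\<not> E x p"
    have xA: "x \<notin> A" using AnS x by auto
    obtain g where gA: "g \<in> A" and gp: "E g p" and dg: "dd g = m" using P2[OF pA dp] by blast
    have gv: "\<not> E g v" using P1[OF gA vA] dv dg by auto
    have xg: "\<not> E x g"
    proof
      assume xg: "E x g"
      have "induced_P4 E x g p v"
        unfolding induced_P4_def using xg gp pv xp xv gv xA gA pA vA dv dp dg Es by auto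
      then show False using nl P4L gA pA vA by blast
    qed
    have IH: "Suc m \<le> 2 \<and> (Suc m = 2 \<longrightarrow> E a p)"
      using Suc.IH pA gA gp dp dg xp xg by blast
    show "Suc (Suc m) \<le> 2 \<and> (Suc (Suc m) = 2 \<longrightarrow> E a v)"
    proof (cases m)
      case 0
      have gu: "g = u" using d0[OF gA] dg 0 by simp
      obtain q where qA: "q \<in> A" and qa: "E q a" and dq: "dd q = 0" using P2[OF aA] da by auto
      have qu: "q = u" using d0[OF qA dq] .
      have ap: "a \<noteq> p" using xa xp by auto
      have "E a p"
      proof (rule ccontr)
        assume nap: "\<not> E a p"
        have "induced_P4 E x a u p"
          unfolding induced_P4_def using xa qa qu gp gu nap xu xp xA aA uA pA ap da dp 0 du Es
          by auto
        then show False using nl P4L aA uA pA by blast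
      qed
      have "E a v"
      proof (rule ccontr)
        assume nav: "\<not> E a v"
        have "induced_P4 E x a p v"
          unfolding induced_P4_def using xa \<open>E a p\<close> pv nav xv xp xA aA pA vA ap da dv dp 0
          by auto
        then show False using nl P4L aA pA vA by blast
      qed
      then show ?thesis using 0 by simp
    next
      case (Suc k)
      then have k: "k = 0" using IH by simp
      have ap: "E a p" using IH Suc k by simp
      have av: "\<not> E a v" using P1[OF aA vA] da dv Suc k by auto
      have "induced_P4 E x a p v"
        unfolding induced_P4_def using xa ap pv av xv xp xA aA pA vA da dv dp Suc k
        by auto
      then show ?thesis using nl P4L aA pA vA by blast
    qed
  qed
qed

lemma main:
  assumes x: "x \<in> S" and y: "y \<in> S" and bad: "\<not> lucky_pair E A x y"
  shows "E u x \<or> E u y \<or> E x y \<or> E (f x) y \<or> E (f y) x \<or> x = y"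
proof (rule ccontr)
  assume H: "\<not> ?thesis"
  have nl: "\<not> lucky_vertex E A x" using bad unfolding lucky_pair_def by blast
  have np: "\<not> (\<exists>b \<in> A. \<exists>c \<in> A. induced_P4 E x b c y)" using bad unfolding lucky_pair_def by blast
  have xA: "x \<notin> A" and yA: "y \<notin> A" using AnS x y by auto
  have xu: "\<not> E x u" and yu: "\<not> E y u" and xy: "\<not> E x y" and ay: "\<not> E (f x) y"
    and cx: "\<not> E x (f y)" and xney: "x \<noteq> y" using H Es by blast+
  define a where "a = f x"
  define c where "c = f y"
  have aA: "a \<in> A" and xa: "E x a" and da: "dd a = ell x" using f_prop[OF x] a_def by auto
  have cA: "c \<in> A" and yc: "E y c" and dc: "dd c = ell y" using f_prop[OF y] c_def by auto
  have "ell x \<noteq> 0" using d0[OF aA] da xa xu by auto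
  moreover have "ell x < 2" using L_far[OF x] nl by fastforce
  ultimately have lx: "ell x = 1" by simp
  have ly0: "ell y \<noteq> 0" using d0[OF cA] dc yc yu by auto
  have ac: "a \<noteq> c" using ay yc a_def c_def Es by blast
  have ay': "\<not> E a y" using ay a_def by simp
  have xc: "\<not> E x c" using cx c_def by simp
  show False
  proof (cases "ell y = 1")
    case True
    obtain q where qA: "q \<in> A" and qc: "E q c" and dq: "dd q = 0" using P2[OF cA] dc True by auto
    have qu: "q = u" using d0[OF qA dq] .
    obtain q' where q'A: "q' \<in> A" and q'a: "E q' a" and dq': "dd q' = 0" using P2[OF aA] da lx by auto
    have q'u: "q' = u" using d0[OF q'A dq'] .
    show False
    proof (cases "E a c")
      case True
      have "induced_P4 E x a c y"
        unfolding induced_P4_def using xa True Es[OF yc] xc ay' xy xA yA aA cA ac xney by auto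
      then show False using np aA cA by blast
    next
      case False
      have "induced_P4 E x a u c"
        using xa Es[OF q'a] q'u qc qu xc xu False xA ac aA cA uA da dc lx du \<open>ell y = 1\<close>
        unfolding induced_P4_def by auto
      then show False using nl P4L aA uA cA by blast
    qed
  next
    case False
    then have "ell y \<ge> 2" using ly0 by simp
    then obtain m where m: "ell y = Suc (Suc m)" by (metis add_2_eq_Suc le_Suc_ex)
    obtain p where pA: "p \<in> A" and pc: "E p c" and dp: "dd p = Suc m" using P2[OF cA] dc m by auto
    have yp: "\<not> E y p" using ell_le[OF pA, of y] dp m by auto
    have pnc: "p \<noteq> c" using dp dc m by auto
    have xp: "\<not> E x p"
    proof
      assume xp: "E x p"
      have py: "\<not> E p y" using yp Es by blast
      have "induced_P4 E x p c y"
        unfolding induced_P4_def using xp pc Es[OF yc] xc py xy xA yA pA cA pnc xney by auto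
      then show False using np pA cA by blast
    qed
    have "Suc (Suc m) \<le> 2 \<and> (Suc (Suc m) = 2 \<longrightarrow> E a c)"
    proof -
      have da1: "dd a = 1" using da lx by simp
      have dcc: "dd c = Suc (Suc m)" using dc m by simp
      show ?thesis using claim[OF x nl xu aA xa da1, of "Suc m", rule_format, OF cA pA pc dcc dp xc xp] .
    qed
    then have "E a c" by auto
    have "induced_P4 E x a c y"
      unfolding induced_P4_def using xa \<open>E a c\<close> Es[OF yc] xc ay' xy xA yA aA cA ac xney by auto
    then show False using np aA cA by blast
  qed
qed

end


lemma pairsum:
  fixes w :: "'a \<Rightarrow> real"
  assumes "finite S"
  shows "(\<Sum>(x, y) \<in> {(x, y) \<in> S \<times> S. P x y}. w x * w y) = (\<Sum>x\<in>S. w x * sum w {y \<in> S. P x y})"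
proof -
  have eq: "{(x, y) \<in> S \<times> S. P x y} = (SIGMA x:S. {y \<in> S. P x y})" by auto
  have "(\<Sum>x\<in>S. \<Sum>y\<in>{y \<in> S. P x y}. w x * w y) = (\<Sum>(x, y) \<in> (SIGMA x:S. {y \<in> S. P x y}). w x * w y)"
    by (rule sum.Sigma) (use assms in auto)
  moreover have "(\<Sum>x\<in>S. w x * sum w {y \<in> S. P x y}) = (\<Sum>x\<in>S. \<Sum>y\<in>{y \<in> S. P x y}. w x * w y)"
    by (simp add: sum_distrib_left)
  ultimately show ?thesis unfolding eq by simp
qed

lemma pairbound:
  fixes w :: "'a \<Rightarrow> real"
  assumes "finite S" "\<forall>x\<in>S. 0 \<le> w x" "sum w S = 1" "\<forall>x\<in>S. sum w {y \<in> S. P x y} \<le> c"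
  shows "(\<Sum>(x, y) \<in> {(x, y) \<in> S \<times> S. P x y}. w x * w y) \<le> c"
proof -
  have "(\<Sum>x\<in>S. w x * sum w {y \<in> S. P x y}) \<le> (\<Sum>x\<in>S. w x * c)"
    by (rule sum_mono) (use assms in \<open>auto intro: mult_left_mono\<close>)
  also have "\<dots> = (\<Sum>x\<in>S. w x) * c" by (rule sum_distrib_right[symmetric])
  also have "\<dots> = c" using assms(3) by simp
  finally show ?thesis using pairsum[OF assms(1), where P=P and w=w] by simp
qed

lemma pairconst:
  fixes w :: "'a \<Rightarrow> real"
  assumes "finite S" "sum w S = 1"
  shows "(\<Sum>(x, y) \<in> {(x, y) \<in> S \<times> S. Q y}. w x * w y) = sum w {y \<in> S. Q y}"
proof -
  have "(\<Sum>x\<in>S. w x * sum w {y \<in> S. Q y}) = sum w S * sum w {y \<in> S. Q y}"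
    by (simp add: sum_distrib_right)
  then show ?thesis using pairsum[OF assms(1), where P="\<lambda>x y. Q y" and w=w] assms(2) by simp
qed

lemma pairswap:
  "(\<Sum>(x, y) \<in> {(x, y) \<in> S \<times> S. P x y}. w x * w y) = (\<Sum>(x, y) \<in> {(x, y) \<in> S \<times> S. P y x}. (w x * w y :: real))"
  by (rule sum.reindex_bij_witness[where i=prod.swap and j=prod.swap]) auto

lemma unbound:
  fixes g :: "'b \<Rightarrow> real"
  assumes "finite X" "finite Y" "\<forall>z\<in>X \<union> Y. 0 \<le> g z"
  shows "sum g (X \<union> Y) \<le> sum g X + sum g Y"
proof -
  have "0 \<le> sum g (X \<inter> Y)" by (rule sum_nonneg) (use assms in auto)
  then show ?thesis using sum_Un[OF assms(1,2), of g] by simp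
qed

lemma onecomp:
  fixes V :: "'a set" and E :: "'a \<Rightarrow> 'a \<Rightarrow> bool" and S C :: "'a set"
    and w :: "'a \<Rightarrow> real" and \<alpha> :: real
  assumes sg: "simple_graph V E"
    and pw: "prob_weights S w"
    and nb: "\<forall>v \<in> V. sum w (nbhd V E v \<inter> S) < \<alpha>"
    and fc: "full_component V E S C"
  shows "(\<Sum>(x, y) \<in> {(x, y) \<in> S \<times> S. \<not> lucky_pair E C x y}. w x * w y) < 6 * \<alpha>"
proof -
  obtain u where uW: "u \<in> V - S" and Cdef: "C = {v. conn_in E (V - S) u v}"
    and fullC: "\<forall>x \<in> S. \<exists>c \<in> C. E x c"
    using fc unfolding full_component_def component_of_def by blast
  interpret L: lsetup V E S C u using sg uW Cdef fullC by unfold_locales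
  have w0: "\<forall>x\<in>S. 0 \<le> w x" and w1: "sum w S = 1" using pw unfolding prob_weights_def by auto
  have fin: "finite S" using w1 by (metis sum.infinite zero_neq_one)
  have nbeq: "\<And>v. v \<in> V \<Longrightarrow> {y \<in> S. E v y} = nbhd V E v \<inter> S"
    unfolding nbhd_def using L.EV by blast
  have uV: "u \<in> V" using uW by auto
  have xV: "\<And>x. x \<in> S \<Longrightarrow> x \<in> V" using L.f_prop L.EV by blast
  have fV: "\<And>x. x \<in> S \<Longrightarrow> L.f x \<in> V" using L.f_prop L.AV by blast
  define g where "g = (\<lambda>(x::'a, y::'a). w x * w y)"
  define U1 where "U1 = {(x, y) \<in> S \<times> S. E u x}"
  define U2 where "U2 = {(x, y) \<in> S \<times> S. E u y}"
  define U3 where "U3 = {(x, y) \<in> S \<times> S. E x y}"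
  define U4 where "U4 = {(x, y) \<in> S \<times> S. E (L.f x) y}"
  define U5 where "U5 = {(x, y) \<in> S \<times> S. E (L.f y) x}"
  define U6 where "U6 = {(x, y) \<in> S \<times> S. x = y}"
  define Bad where "Bad = {(x, y) \<in> S \<times> S. \<not> lucky_pair E C x y}"
  have sub: "Bad \<subseteq> U1 \<union> U2 \<union> U3 \<union> U4 \<union> U5 \<union> U6"
  proof
    fix z assume "z \<in> Bad"
    then obtain x y where z: "z = (x, y)" and x: "x \<in> S" and y: "y \<in> S" and b: "\<not> lucky_pair E C x y"
      unfolding Bad_def by blast
    from L.main[OF x y b] show "z \<in> U1 \<union> U2 \<union> U3 \<union> U4 \<union> U5 \<union> U6"
      unfolding z U1_def U2_def U3_def U4_def U5_def U6_def using x y by blast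
  qed
  have finU: "finite (S \<times> S)" using fin by simp
  have Us: "U1 \<subseteq> S \<times> S" "U2 \<subseteq> S \<times> S" "U3 \<subseteq> S \<times> S" "U4 \<subseteq> S \<times> S" "U5 \<subseteq> S \<times> S" "U6 \<subseteq> S \<times> S"
    unfolding U1_def U2_def U3_def U4_def U5_def U6_def by auto
  have fins: "finite U1" "finite U2" "finite U3" "finite U4" "finite U5" "finite U6"
    using Us finU finite_subset by blast+
  have gnn: "\<forall>z \<in> S \<times> S. 0 \<le> g z" unfolding g_def using w0 by auto
  have "sum g Bad \<le> sum g (U1 \<union> U2 \<union> U3 \<union> U4 \<union> U5 \<union> U6)"
    by (rule sum_mono2) (use sub fins Us gnn in auto)
  also have "\<dots> \<le> sum g U1 + sum g U2 + sum g U3 + sum g U4 + sum g U5 + sum g U6"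
  proof -
    have a1: "sum g (U1 \<union> U2) \<le> sum g U1 + sum g U2"
      by (rule unbound) (use fins Us gnn in auto)
    have a2: "sum g (U1 \<union> U2 \<union> U3) \<le> sum g (U1 \<union> U2) + sum g U3"
      by (rule unbound) (use fins Us gnn in auto)
    have a3: "sum g (U1 \<union> U2 \<union> U3 \<union> U4) \<le> sum g (U1 \<union> U2 \<union> U3) + sum g U4"
      by (rule unbound) (use fins Us gnn in auto)
    have a4: "sum g (U1 \<union> U2 \<union> U3 \<union> U4 \<union> U5) \<le> sum g (U1 \<union> U2 \<union> U3 \<union> U4) + sum g U5"
      by (rule unbound) (use fins Us gnn in auto)
    have a5: "sum g (U1 \<union> U2 \<union> U3 \<union> U4 \<union> U5 \<union> U6) \<le> sum g (U1 \<union> U2 \<union> U3 \<union> U4 \<union> U5) + sum g U6"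
      by (rule unbound) (use fins Us gnn in auto)
    show ?thesis using a1 a2 a3 a4 a5 by linarith
  qed
  finally have tot: "sum g Bad \<le> sum g U1 + sum g U2 + sum g U3 + sum g U4 + sum g U5 + sum g U6" .
  have s2: "sum g U2 < \<alpha>"
  proof -
    have "sum g U2 = sum w {y \<in> S. E u y}"
      unfolding g_def U2_def by (rule pairconst[OF fin w1])
    also have "\<dots> < \<alpha>" using nbeq[OF uV] nb uV by simp
    finally show ?thesis .
  qed
  have s1: "sum g U1 < \<alpha>"
  proof -
    have "sum g U1 = sum g U2" unfolding g_def U1_def U2_def by (rule pairswap)
    then show ?thesis using s2 by simp
  qed
  have s3: "sum g U3 \<le> \<alpha>"
    unfolding g_def U3_def
    by (rule pairbound[OF fin w0 w1]) (use nbeq xV nb in \<open>auto intro: less_imp_le\<close>)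
  have s4: "sum g U4 \<le> \<alpha>"
    unfolding g_def U4_def
    by (rule pairbound[OF fin w0 w1]) (use nbeq fV nb in \<open>auto intro: less_imp_le\<close>)
  have s5: "sum g U5 \<le> \<alpha>"
  proof -
    have "sum g U5 = sum g U4" unfolding g_def U4_def U5_def by (rule pairswap)
    then show ?thesis using s4 by simp
  qed
  have s6: "sum g U6 \<le> \<alpha>"
    unfolding g_def U6_def
  proof (rule pairbound[OF fin w0 w1], intro ballI)
    fix x assume x: "x \<in> S"
    have e: "{y \<in> S. x = y} = {x}" using x by auto
    have fx: "E (L.f x) x" using L.f_prop[OF x] L.Es by blast
    have "w x \<le> sum w (nbhd V E (L.f x) \<inter> S)"
      by (rule member_le_sum) (use x fx xV w0 fV[OF x] L.sg in \<open>auto simp: nbhd_def simple_graph_def\<close>)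
    also have "\<dots> < \<alpha>" using nb fV[OF x] by blast
    finally show "sum w {y \<in> S. x = y} \<le> \<alpha>" unfolding e by simp
  qed
  have "sum g Bad < 6 * \<alpha>" using tot s1 s2 s3 s4 s5 s6 by linarith
  then show ?thesis unfolding g_def Bad_def .
qed

theorem lemma1:
  fixes V :: "'a set" and E :: "'a \<Rightarrow> 'a \<Rightarrow> bool" and S A B :: "'a set"
    and w :: "'a \<Rightarrow> real" and \<alpha> :: real
  assumes "simple_graph V E"
    and "minimal_separator V E S"
    and "prob_weights S w"
    and "\<alpha> < 1"
    and "\<forall>v \<in> V. sum w (nbhd V E v \<inter> S) < \<alpha>"
    and "full_component V E S A" and "full_component V E S B" and "A \<noteq> B"
  shows "(\<Sum>(x, y) \<in> {(x, y) \<in> S \<times> S. \<not> lucky_pair E A x y}. w x * w y) < 6 * \<alpha>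
       \<and> (\<Sum>(x, y) \<in> {(x, y) \<in> S \<times> S. \<not> lucky_pair E B x y}. w x * w y) < 6 * \<alpha>"
  using onecomp[OF assms(1,3,5,6)] onecomp[OF assms(1,3,5,7)] by blast

end
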